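(* Let $r,s>0$ and let $\mathbf{P}$ be a poset in $C(\{r,s\})$, i.e. $\mathbf{P}$ has an interval representation in which every interval has length $r$ or $s$. Then $\dim(\mathbf{P})\le 5$.
   Context: An interval representation of a poset $(X,P)$ assigns to each $x\in X$ a closed real interval $[l_x,r_x]$ such that $x<y$ in $P$ iff $r_x<l_y$; the length of $[l_x,r_x]$ is $r_x-l_x$. The dimension $\dim(\mathbf{P})$ is the minimum number of linear extensions of $P$ whose intersection is $P$. *)

theory Defs
  imports Complex_Main
begin

text \<open>A poset (X,P) is given by its ground set X and its strict order relation P
  (a set of pairs, (x,y) \<in> P meaning x < y in P).\<close>

definition linear_extension :: "'a set \<Rightarrow> 'a rel \<Rightarrow> 'a rel \<Rightarrow> bool" where
  "linear_extension X P L \<longleftrightarrow>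
     L \<subseteq> X \<times> X \<and> irrefl L \<and> trans L \<and>
     (\<forall>x\<in>X. \<forall>y\<in>X. x \<noteq> y \<longrightarrow> (x, y) \<in> L \<or> (y, x) \<in> L) \<and> P \<subseteq> L"

definition order_dim :: "'a set \<Rightarrow> 'a rel \<Rightarrow> nat" where
  "order_dim X P = (LEAST k. \<exists>Ls. finite Ls \<and> card Ls = k \<and>
        (\<forall>L\<in>Ls. linear_extension X P L) \<and> \<Inter>Ls = P)"

definition interval_rep :: "'a set \<Rightarrow> 'a rel \<Rightarrow> ('a \<Rightarrow> real) \<Rightarrow> ('a \<Rightarrow> real) \<Rightarrow> bool" where
  "interval_rep X P lft rgt \<longleftrightarrow>
     P \<subseteq> X \<times> X \<and> (\<forall>x\<in>X. lft x \<le> rgt x) \<and>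
     (\<forall>x\<in>X. \<forall>y\<in>X. (x, y) \<in> P \<longleftrightarrow> rgt x < lft y)"

definition in_class_C :: "real set \<Rightarrow> 'a set \<Rightarrow> 'a rel \<Rightarrow> bool" where
  "in_class_C Lens X P \<longleftrightarrow>
     (\<exists>lft rgt. interval_rep X P lft rgt \<and> (\<forall>x\<in>X. rgt x - lft x \<in> Lens))"

end

theory Submission
  imports Defs "HOL-Library.Product_Lexorder"
begin

definition Lk :: "'a set \<Rightarrow> ('a \<Rightarrow> 'b::linorder) \<Rightarrow> 'a rel" where
  "Lk X K = {(x,y). x \<in> X \<and> y \<in> X \<and> K x < K y}"

lemma Lk_ext:
  assumes "inj_on K X" "\<And>x y. (x,y) \<in> P \<Longrightarrow> K x < K y" "P \<subseteq> X \<times> X"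
  shows "linear_extension X P (Lk X K)"
  unfolding linear_extension_def Lk_def irrefl_def trans_def
  using assms by (auto simp: inj_on_def) (meson linorder_neqE order_less_trans)+

definition key1 :: "real \<Rightarrow> ('a\<Rightarrow>real) \<Rightarrow> ('a\<Rightarrow>real) \<Rightarrow> ('a\<Rightarrow>real) \<Rightarrow> 'a \<Rightarrow> real\<times>real\<times>real" where
  "key1 r l g t x = (if g x - l x = r then l x else g x, if g x - l x = r then 0 else 1, t x)"
definition key2 :: "real \<Rightarrow> ('a\<Rightarrow>real) \<Rightarrow> ('a\<Rightarrow>real) \<Rightarrow> ('a\<Rightarrow>real) \<Rightarrow> 'a \<Rightarrow> real\<times>real\<times>real" where
  "key2 r l g t x = (if g x - l x = r then g x else l x, if g x - l x = r then 1 else 0, t x)"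
definition key3 :: "('a\<Rightarrow>real) \<Rightarrow> ('a\<Rightarrow>real) \<Rightarrow> ('a\<Rightarrow>real) \<Rightarrow> 'a \<Rightarrow> real\<times>real\<times>real" where
  "key3 l g t x = ((g x - l x) * (of_int \<lfloor>l x / (g x - l x)\<rfloor> + 1), - l x, - t x)"
definition key4 :: "('a\<Rightarrow>real) \<Rightarrow> ('a\<Rightarrow>real) \<Rightarrow> ('a\<Rightarrow>real) \<Rightarrow> 'a \<Rightarrow> real\<times>real\<times>real" where
  "key4 l g t x = (if even \<lfloor>l x / (g x - l x)\<rfloor> then g x else l x,
                   if even \<lfloor>l x / (g x - l x)\<rfloor> then 1 else 0, t x)"
definition key5 :: "('a\<Rightarrow>real) \<Rightarrow> ('a\<Rightarrow>real) \<Rightarrow> ('a\<Rightarrow>real) \<Rightarrow> 'a \<Rightarrow> real\<times>real\<times>real" where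
  "key5 l g t x = (if odd \<lfloor>l x / (g x - l x)\<rfloor> then g x else l x,
                   if odd \<lfloor>l x / (g x - l x)\<rfloor> then 1 else 0, t x)"

lemma key3_bounds:
  assumes "l x < g x"
  shows "l x \<le> fst (key3 l g t x) \<and> fst (key3 l g t x) \<le> g x"
proof -
  define w where "w = g x - l x"
  have w: "w > 0" using assms w_def by simp
  have a: "of_int \<lfloor>l x / w\<rfloor> \<le> l x / w" "l x / w < of_int \<lfloor>l x / w\<rfloor> + 1"
    by linarith+
  have h1: "w * of_int \<lfloor>l x / w\<rfloor> \<le> w * (l x / w)"
    by (rule mult_left_mono) (use a(1) w in auto)
  have h2: "w * (l x / w) < w * (of_int \<lfloor>l x / w\<rfloor> + 1)"
    by (rule mult_strict_left_mono) (use a(2) w in auto)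
  have "w * (l x / w) = l x" using w by simp
  then have "w * of_int \<lfloor>l x / w\<rfloor> \<le> l x" "l x < w * (of_int \<lfloor>l x / w\<rfloor> + 1)"
    using h1 h2 by auto
  then show ?thesis unfolding key3_def w_def[symmetric] by (simp add: algebra_simps w_def)
qed

lemma mono_key:
  assumes "interval_rep X P l g" "\<And>x. x \<in> X \<Longrightarrow> l x \<le> fst (K x) \<and> fst (K x) \<le> g x"
    "(x,y) \<in> P"
  shows "K x < K y"
proof -
  have "x \<in> X" "y \<in> X" "g x < l y" using assms unfolding interval_rep_def by blast+
  then have "fst (K x) < fst (K y)" using assms(2)[of x] assms(2)[of y] by linarith
  then show ?thesis by (cases "K x"; cases "K y") auto
qed

lemma core:
  fixes l g t :: "'a \<Rightarrow> real" and r s :: real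
  assumes "r > 0" "s > 0" "g x - l x \<in> {r,s}" "g y - l y \<in> {r,s}"
    "\<not> g x < l y" "t x \<noteq> t y"
  shows "key1 r l g t y < key1 r l g t x \<or> key2 r l g t y < key2 r l g t x \<or>
         key3 l g t y < key3 l g t x \<or> key4 l g t y < key4 l g t x \<or> key5 l g t y < key5 l g t x"
proof (cases "g x - l x = g y - l y")
  case False
  then show ?thesis using assms
    unfolding key1_def key2_def by auto
next
  case True
  define w where "w = g x - l x"
  have w: "w > 0" using assms(1,2,3) w_def by auto
  have wy: "g y - l y = w" using True w_def by simp
  show ?thesis
  proof (cases "l x < l y")
    case lt: True
    define kx where "kx = \<lfloor>l x / w\<rfloor>"
    define ky where "ky = \<lfloor>l y / w\<rfloor>"
    have "kx \<le> ky" unfolding kx_def ky_def using lt w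
      by (intro floor_mono) (simp add: divide_right_mono)
    have "l y / w \<le> l x / w + 1" using assms(5) w w_def by (simp add: field_simps)
    then have "ky \<le> kx + 1" unfolding kx_def ky_def
      by (metis floor_add_int floor_mono of_int_1)
    consider "ky = kx" | "ky = kx + 1" "even kx" | "ky = kx + 1" "odd kx"
      using \<open>kx \<le> ky\<close> \<open>ky \<le> kx + 1\<close> by linarith
    then show ?thesis
    proof cases
      case 1
      then have "key3 l g t y < key3 l g t x"
        unfolding key3_def using lt w_def[symmetric] wy kx_def ky_def by simp
      then show ?thesis by simp
    next
      case 2
      then have "odd ky" by simp
      have "l y \<le> g x" using assms(5) by simp
      then have "key4 l g t y < key4 l g t x"
        unfolding key4_def using 2 \<open>odd ky\<close> w_def[symmetric] wy kx_def ky_def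
        by (auto simp: less_le)
      then show ?thesis by simp
    next
      case 3
      then have "even ky" by simp
      have "l y \<le> g x" using assms(5) by simp
      then have "key5 l g t y < key5 l g t x"
        unfolding key5_def using 3 \<open>even ky\<close> w_def[symmetric] wy kx_def ky_def
        by (auto simp: less_le)
      then show ?thesis by simp
    qed
  next
    case False
    then consider "l y < l x" | "l y = l x" by linarith
    then show ?thesis
    proof cases
      case 1
      then have "key1 r l g t y < key1 r l g t x"
        unfolding key1_def using wy w_def by auto
      then show ?thesis by simp
    next
      case 2
      then have gg: "g y = g x" using wy w_def by simp
      show ?thesis
      proof (cases "t y < t x")
        case True
        then have "key1 r l g t y < key1 r l g t x" unfolding key1_def using 2 gg by simp
        then show ?thesis by simp
      next
        case False
        then have "t x < t y" using assms(6) by linarith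
        then have "key3 l g t y < key3 l g t x" unfolding key3_def using 2 gg by simp
        then show ?thesis by simp
      qed
    qed
  qed
qed

theorem proposition6p1:
  fixes r s :: real and X :: "'a set" and P :: "'a rel"
  assumes "r > 0" and "s > 0"
    and "finite X"
    and "in_class_C {r, s} X P"
  shows "order_dim X P \<le> 5"
proof -
  obtain l g where rep: "interval_rep X P l g" and len: "\<forall>x\<in>X. g x - l x \<in> {r, s}"
    using assms(4) unfolding in_class_C_def by blast
  obtain f :: "'a \<Rightarrow> nat" and n where f: "inj_on f X"
    using finite_imp_inj_to_nat_seg[OF assms(3)] by blast
  define t where "t x = real (f x)" for x
  have tinj: "inj_on t X" using f unfolding t_def inj_on_def by simp
  have PX: "P \<subseteq> X \<times> X" using rep unfolding interval_rep_def by blast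
  have lt: "l x < g x" if "x \<in> X" for x using len that assms(1,2) by auto
  define K1 where "K1 = key1 r l g t"
  define K2 where "K2 = key2 r l g t"
  define K3 where "K3 = key3 l g t"
  define K4 where "K4 = key4 l g t"
  define K5 where "K5 = key5 l g t"
  have i1: "inj_on K1 X"
    by (rule inj_on_imageI2[of "\<lambda>p. snd (snd p)"]) (simp add: comp_def K1_def key1_def tinj)
  have i2: "inj_on K2 X"
    by (rule inj_on_imageI2[of "\<lambda>p. snd (snd p)"]) (simp add: comp_def K2_def key2_def tinj)
  have i3: "inj_on K3 X"
    by (rule inj_on_imageI2[of "\<lambda>p. - snd (snd p)"]) (simp add: comp_def K3_def key3_def tinj)
  have i4: "inj_on K4 X"
    by (rule inj_on_imageI2[of "\<lambda>p. snd (snd p)"]) (simp add: comp_def K4_def key4_def tinj)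
  have i5: "inj_on K5 X"
    by (rule inj_on_imageI2[of "\<lambda>p. snd (snd p)"]) (simp add: comp_def K5_def key5_def tinj)
  note injs = i1 i2 i3 i4 i5
  have b1: "l x \<le> fst (K1 x) \<and> fst (K1 x) \<le> g x" if "x \<in> X" for x
    using lt[OF that] unfolding K1_def key1_def by auto
  have b2: "l x \<le> fst (K2 x) \<and> fst (K2 x) \<le> g x" if "x \<in> X" for x
    using lt[OF that] unfolding K2_def key2_def by auto
  have b3: "l x \<le> fst (K3 x) \<and> fst (K3 x) \<le> g x" if "x \<in> X" for x
    using key3_bounds[of l x g t, OF lt[OF that]] unfolding K3_def by auto
  have b4: "l x \<le> fst (K4 x) \<and> fst (K4 x) \<le> g x" if "x \<in> X" for x
    using lt[OF that] unfolding K4_def key4_def by auto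
  have b5: "l x \<le> fst (K5 x) \<and> fst (K5 x) \<le> g x" if "x \<in> X" for x
    using lt[OF that] unfolding K5_def key5_def by auto
  define Ls where "Ls = {Lk X K1, Lk X K2, Lk X K3, Lk X K4, Lk X K5}"
  have ext: "\<forall>L\<in>Ls. linear_extension X P L"
    unfolding Ls_def using Lk_ext[OF injs(1) mono_key[OF rep b1] PX]
      Lk_ext[OF injs(2) mono_key[OF rep b2] PX] Lk_ext[OF injs(3) mono_key[OF rep b3] PX]
      Lk_ext[OF injs(4) mono_key[OF rep b4] PX] Lk_ext[OF injs(5) mono_key[OF rep b5] PX]
    by blast
  have inter: "\<Inter>Ls = P"
  proof
    show "P \<subseteq> \<Inter>Ls" using ext unfolding linear_extension_def by blast
  next
    show "\<Inter>Ls \<subseteq> P"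
    proof
      fix p assume p: "p \<in> \<Inter>Ls"
      obtain x y where pxy: "p = (x,y)" by fastforce
      have m: "(x,y) \<in> Lk X K1" "(x,y) \<in> Lk X K2" "(x,y) \<in> Lk X K3" "(x,y) \<in> Lk X K4"
        "(x,y) \<in> Lk X K5"
        using p pxy unfolding Ls_def by simp_all
      have xy: "x \<in> X" "y \<in> X" and k: "K1 x < K1 y" "K2 x < K2 y" "K3 x < K3 y"
        "K4 x < K4 y" "K5 x < K5 y"
        using m unfolding Lk_def by simp_all
      have "x \<noteq> y" using k(1) by auto
      show "p \<in> P"
      proof (rule ccontr)
        assume "p \<notin> P"
        then have ng: "\<not> g x < l y" using rep xy pxy unfolding interval_rep_def by blast
        have tn: "t x \<noteq> t y" using tinj xy \<open>x \<noteq> y\<close> unfolding inj_on_def by blast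
        have "K1 y < K1 x \<or> K2 y < K2 x \<or> K3 y < K3 x \<or> K4 y < K4 x \<or> K5 y < K5 x"
          unfolding K1_def K2_def K3_def K4_def K5_def
          by (rule core[OF assms(1,2) len[rule_format, OF xy(1)] len[rule_format, OF xy(2)] ng tn])
        then show False using k by (meson order_less_asym)
      qed
    qed
  qed
  have card: "card Ls \<le> 5"
  proof -
    have "Ls = set [Lk X K1, Lk X K2, Lk X K3, Lk X K4, Lk X K5]" unfolding Ls_def by simp
    then show ?thesis using card_length[of "[Lk X K1, Lk X K2, Lk X K3, Lk X K4, Lk X K5]"] by simp
  qed
  have "order_dim X P \<le> card Ls"
  proof -
    have "finite Ls" unfolding Ls_def by simp
    then show ?thesis unfolding order_dim_def using ext inter by (intro Least_le) blast
  qed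
  then show ?thesis using card by linarith
qed

end
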